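(* Let $G$ be a (possibly empty) complete multipartite graph all of whose partite sets have even size, and let $q_1,q_2,q_3,q_4\ge 0$ be integers. Let $\gamma$ be the complete multipartite graph $G+K_{q_1,q_2,q_3,q_4}$. Suppose one of the following holds: (1) all $q_i=0$; (2) one $q_i$ is odd and all other $q_i=0$; (3) two of the $q_i$ equal $1$, one $q_i=0$, and the remaining $q_i$ is either odd or $0$; (4) all $q_i=1$. Then $\gamma$ is achirally embeddable in $S^3$.
   Context: A graph is achirally embeddable in $S^3$ if it has an embedding $\Gamma$ in $S^3$ for which there is an orientation-reversing homeomorphism $h$ of $S^3$ with $h(\Gamma)=\Gamma$. The join $A+B$ of graphs $A$ and $B$ is $A\cup B$ together with edges joining every vertex of $A$ to every vertex of $B$. The partite sets of a complete multipartite graph are its maximal independent classes of vertices; the size of a partite set is its number of vertices. A value $q_i=0$ means that partite set is absent. *)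

theory Defs
  imports "HOL-Homology.Homology"
begin

text \<open>The 3-sphere: the library's nsphere 3, the unit sphere in R^4 realised on
  functions nat => real vanishing beyond index 3.\<close>

abbreviation S3 :: "(nat \<Rightarrow> real) topology" where
  "S3 \<equiv> nsphere 3"

text \<open>A finite simple graph is given by a vertex set V and a set E of 2-element
  subsets of V.\<close>

definition graph_embedding_S3 ::
  "'v set \<Rightarrow> 'v set set \<Rightarrow> ('v \<Rightarrow> nat \<Rightarrow> real) \<Rightarrow> ('v set \<Rightarrow> real \<Rightarrow> nat \<Rightarrow> real) \<Rightarrow> bool"
  where
  "graph_embedding_S3 V E pos c \<longleftrightarrow>
     inj_on pos V \<and> pos ` V \<subseteq> topspace S3 \<and>
     (\<forall>e\<in>E. continuous_map (top_of_set {0..1}) S3 (c e) \<and>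
             inj_on (c e) {0..1} \<and> c e ` {0, 1} = pos ` e \<and>
             c e ` {0<..<1} \<inter> pos ` V = {}) \<and>
     (\<forall>e\<in>E. \<forall>e'\<in>E. e \<noteq> e' \<longrightarrow> c e ` {0<..<1} \<inter> c e' ` {0<..<1} = {})"

definition graph_image_S3 ::
  "'v set \<Rightarrow> 'v set set \<Rightarrow> ('v \<Rightarrow> nat \<Rightarrow> real) \<Rightarrow> ('v set \<Rightarrow> real \<Rightarrow> nat \<Rightarrow> real) \<Rightarrow> (nat \<Rightarrow> real) set"
  where
  "graph_image_S3 V E pos c = pos ` V \<union> (\<Union>e\<in>E. c e ` {0..1})"

definition orientation_reversing_S3 :: "((nat \<Rightarrow> real) \<Rightarrow> nat \<Rightarrow> real) \<Rightarrow> bool" where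
  "orientation_reversing_S3 h \<longleftrightarrow> homeomorphic_map S3 S3 h \<and> Brouwer_degree2 3 h = -1"

definition achirally_embeddable :: "'v set \<Rightarrow> 'v set set \<Rightarrow> bool" where
  "achirally_embeddable V E \<longleftrightarrow>
     (\<exists>pos c h. graph_embedding_S3 V E pos c \<and> orientation_reversing_S3 h \<and>
               h ` graph_image_S3 V E pos c = graph_image_S3 V E pos c)"

text \<open>The complete multipartite graph with partite sets of sizes ps!0, ps!1, ...
  Vertex (i,j) is the j-th vertex of the i-th partite set; parts of size 0 are absent.\<close>

definition cm_vertices :: "nat list \<Rightarrow> (nat \<times> nat) set" where
  "cm_vertices ps = {(i, j). i < length ps \<and> j < ps ! i}"

definition cm_edges :: "nat list \<Rightarrow> (nat \<times> nat) set set" where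
  "cm_edges ps = {{x, y} | x y. x \<in> cm_vertices ps \<and> y \<in> cm_vertices ps \<and> fst x \<noteq> fst y}"

definition q_condition :: "nat \<Rightarrow> nat \<Rightarrow> nat \<Rightarrow> nat \<Rightarrow> bool" where
  "q_condition q1 q2 q3 q4 \<longleftrightarrow>
    (let q = [q1, q2, q3, q4] in
       (\<forall>i<4. q ! i = 0)
     \<or> (\<exists>i<4. odd (q ! i) \<and> (\<forall>j<4. j \<noteq> i \<longrightarrow> q ! j = 0))
     \<or> (\<exists>i j k l. {i, j, k, l} = {0, 1, 2, 3} \<and>
           q ! i = 1 \<and> q ! j = 1 \<and> q ! k = 0 \<and> (odd (q ! l) \<or> q ! l = 0))
     \<or> (\<forall>i<4. q ! i = 1))"

end

theory Submission
  imports Defs "HOL-Analysis.Analysis" "HOL-Library.Nat_Bijection"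
begin

definition G :: "real \<Rightarrow> real \<Rightarrow> real \<Rightarrow> nat \<Rightarrow> real" where
  "G \<phi> \<psi> \<theta> = (\<lambda>i. if i = 0 then cos \<psi> * sin \<phi> else if i = 1 then cos \<psi> * cos \<phi>
      else if i = 2 then sin \<psi> * cos \<theta> else if i = 3 then sin \<psi> * sin \<theta> else 0)"

definition arc :: "real \<Rightarrow> real \<Rightarrow> real \<Rightarrow> real \<Rightarrow> real \<Rightarrow> nat \<Rightarrow> real" where
  "arc \<alpha> \<beta> \<theta> \<kappa> t = G (\<alpha> + t * (\<beta> - \<alpha>)) (\<kappa> * (t * (1 - t))) \<theta>"

lemma G_top: "G \<phi> \<psi> \<theta> \<in> topspace S3"
proof -
  have "(\<Sum>i\<le>3. (G \<phi> \<psi> \<theta> i)^2) = (cos \<psi>)^2 * ((sin \<phi>)^2 + (cos \<phi>)^2) + (sin \<psi>)^2 * ((cos \<theta>)^2 + (sin \<theta>)^2)"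
    unfolding distrib_left add.assoc[symmetric] by (simp add: G_def numeral_3_eq_3 power_mult_distrib)
  also have "\<dots> = 1" by (simp only: sin_cos_squared_add sin_cos_squared_add2 mult_1_right)
  finally show ?thesis by (simp add: nsphere G_def)
qed

lemma G_eqI: "cos \<theta> = cos \<theta>' \<Longrightarrow> sin \<theta> = sin \<theta>' \<Longrightarrow> G \<phi> \<psi> \<theta> = G \<phi> \<psi> \<theta>'"
  by (simp add: G_def fun_eq_iff)

lemma G_psi0: "G \<phi> 0 \<theta> = G \<phi> 0 \<theta>'"
  by (simp add: G_def fun_eq_iff)

lemma G_phi: "cos \<phi> = cos \<phi>' \<Longrightarrow> sin \<phi> = sin \<phi>' \<Longrightarrow> G \<phi> \<psi> \<theta> = G \<phi>' \<psi> \<theta>"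
  by (simp add: G_def fun_eq_iff)

lemma cont_arc: "continuous_map (top_of_set {0..1}) S3 (arc \<alpha> \<beta> \<theta> \<kappa>)"
proof -
  have "continuous_map (top_of_set {0..1}) euclideanreal (\<lambda>t. arc \<alpha> \<beta> \<theta> \<kappa> t i)" for i
    unfolding arc_def G_def continuous_map_iff_continuous
    by (cases "i = 0"; cases "i=1"; cases "i=2"; cases "i=3") (auto intro!: continuous_intros)
  then show ?thesis
    unfolding nsphere continuous_map_in_subtopology
    using G_top by (auto simp: continuous_map_componentwise_UNIV arc_def nsphere)
qed

lemma sincos_inj:
  assumes "sin x = sin y" "cos x = cos y" "\<bar>x - y\<bar> < 2*pi"
  shows "x = y"
proof -
  have "cos (x - y) = 1"
    using assms by (simp add: cos_diff)
  then obtain n :: int where n: "x - y = of_int n * 2 * pi" using cos_one_2pi_int by auto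
  have "\<bar>real_of_int n\<bar> * (2*pi) < 2*pi" using assms(3) n by (simp add: abs_mult)
  then have "\<bar>real_of_int n\<bar> < 1" by simp
  then have "n = 0" by linarith
  then show ?thesis using n by simp
qed

lemma G_comp: "G \<phi> \<psi> \<theta> 0 = cos \<psi> * sin \<phi>" "G \<phi> \<psi> \<theta> 1 = cos \<psi> * cos \<phi>"
  "G \<phi> \<psi> \<theta> 2 = sin \<psi> * cos \<theta>" "G \<phi> \<psi> \<theta> 3 = sin \<psi> * sin \<theta>"
  by (auto simp: G_def)

lemma sin_small_inj: "0 \<le> (x::real) \<Longrightarrow> x \<le> 1 \<Longrightarrow> 0 \<le> y \<Longrightarrow> y \<le> 1 \<Longrightarrow> sin x = sin y \<Longrightarrow> x = y"
  using sin_inj_pi[of x y] pi_gt3 by auto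

lemma cos_small_pos: "0 \<le> (x::real) \<Longrightarrow> x \<le> 1 \<Longrightarrow> 0 < cos x"
  using cos_gt_zero_pi[of x] pi_gt3 by auto

lemma sin_small_pos: "0 < (x::real) \<Longrightarrow> x \<le> 1 \<Longrightarrow> 0 < sin x"
  using sin_gt_zero[of x] pi_gt3 by auto

lemma G_eq_same_page:
  assumes "G \<phi> \<psi> \<theta> = G \<phi>' \<psi>' \<theta>" "0 \<le> \<psi>" "\<psi> \<le> 1" "0 \<le> \<psi>'" "\<psi>' \<le> 1"
  shows "\<psi> = \<psi>' \<and> sin \<phi> = sin \<phi>' \<and> cos \<phi> = cos \<phi>'"
proof -
  have c2: "sin \<psi> * cos \<theta> = sin \<psi>' * cos \<theta>" and c3: "sin \<psi> * sin \<theta> = sin \<psi>' * sin \<theta>"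
    using assms(1) G_comp by metis+
  have "sin \<psi> = sin \<psi>'"
  proof (rule ccontr)
    assume "sin \<psi> \<noteq> sin \<psi>'"
    then have "cos \<theta> = 0" "sin \<theta> = 0" using c2 c3 by auto
    then show False using sin_cos_squared_add[of \<theta>] by simp
  qed
  then have e: "\<psi> = \<psi>'" using sin_small_inj assms by blast
  have "cos \<psi> * sin \<phi> = cos \<psi>' * sin \<phi>'" "cos \<psi> * cos \<phi> = cos \<psi>' * cos \<phi>'"
    using assms(1) G_comp by metis+
  moreover have "cos \<psi> > 0" using cos_small_pos assms by blast
  ultimately show ?thesis using e by auto
qed

lemma G_eq_pages:
  assumes "G \<phi> \<psi> \<theta> = G \<phi>' \<psi>' \<theta>'" "0 < \<psi>" "\<psi> \<le> 1" "0 < \<psi>'" "\<psi>' \<le> 1"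
  shows "cos \<theta> = cos \<theta>' \<and> sin \<theta> = sin \<theta>'"
proof -
  have c2: "sin \<psi> * cos \<theta> = sin \<psi>' * cos \<theta>'" and c3: "sin \<psi> * sin \<theta> = sin \<psi>' * sin \<theta>'"
    using assms(1) G_comp by metis+
  have "(sin \<psi> * cos \<theta>)^2 + (sin \<psi> * sin \<theta>)^2 = (sin \<psi>' * cos \<theta>')^2 + (sin \<psi>' * sin \<theta>')^2"
    using c2 c3 by simp
  then have "(sin \<psi>)^2 = (sin \<psi>')^2"
    by (simp add: power_mult_distrib flip: distrib_left)
  moreover have "sin \<psi> > 0" "sin \<psi>' > 0" using sin_small_pos assms by blast+
  ultimately have "sin \<psi> = sin \<psi>'" by (simp add: power2_eq_iff_nonneg)
  then show ?thesis using c2 c3 \<open>sin \<psi> > 0\<close> by auto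
qed

lemma G_page_not_C:
  assumes "0 < \<psi>" "\<psi> \<le> 1"
  shows "G \<phi> \<psi> \<theta> \<noteq> G \<phi>' 0 \<theta>'"
proof
  assume "G \<phi> \<psi> \<theta> = G \<phi>' 0 \<theta>'"
  then have "sin \<psi> * cos \<theta> = 0" "sin \<psi> * sin \<theta> = 0" using G_comp by (metis mult_zero_left sin_zero)+
  moreover have "sin \<psi> > 0" using sin_small_pos assms by blast
  ultimately show False using sin_cos_squared_add[of \<theta>] by simp
qed

lemma arc_rev: "arc \<alpha> \<beta> \<theta> \<kappa> (1 - t) = arc \<beta> \<alpha> \<theta> \<kappa> t"
  unfolding arc_def by (rule arg_cong2[where f="\<lambda>a b. G a b \<theta>"]) (auto simp: algebra_simps)

lemma arc_inj:
  assumes "\<alpha> \<noteq> \<beta>" "\<bar>\<beta> - \<alpha>\<bar> < 2*pi" "\<kappa> = 0 \<or> \<kappa> = 1"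
  shows "inj_on (arc \<alpha> \<beta> \<theta> \<kappa>) {0..1}"
proof
  fix t s :: real assume t: "t \<in> {0..1}" and s: "s \<in> {0..1}" and eq: "arc \<alpha> \<beta> \<theta> \<kappa> t = arc \<alpha> \<beta> \<theta> \<kappa> s"
  have b: "0 \<le> \<kappa> * (t * (1 - t))" "\<kappa> * (t * (1 - t)) \<le> 1" "0 \<le> \<kappa> * (s * (1 - s))" "\<kappa> * (s * (1 - s)) \<le> 1"
    using t s assms(3) by (auto intro!: mult_nonneg_nonneg mult_le_one)
  from G_eq_same_page[OF eq[unfolded arc_def] b]
  have "sin (\<alpha> + t * (\<beta> - \<alpha>)) = sin (\<alpha> + s * (\<beta> - \<alpha>))" "cos (\<alpha> + t * (\<beta> - \<alpha>)) = cos (\<alpha> + s * (\<beta> - \<alpha>))"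
    by auto
  moreover have "\<bar>(\<alpha> + t * (\<beta> - \<alpha>)) - (\<alpha> + s * (\<beta> - \<alpha>))\<bar> < 2*pi"
  proof -
    have "\<bar>(\<alpha> + t * (\<beta> - \<alpha>)) - (\<alpha> + s * (\<beta> - \<alpha>))\<bar> = \<bar>t - s\<bar> * \<bar>\<beta> - \<alpha>\<bar>"
      by (simp add: abs_mult flip: left_diff_distrib)
    also have "\<dots> \<le> 1 * \<bar>\<beta> - \<alpha>\<bar>" using t s by (intro mult_right_mono) auto
    finally show ?thesis using assms(2) by simp
  qed
  ultimately have "\<alpha> + t * (\<beta> - \<alpha>) = \<alpha> + s * (\<beta> - \<alpha>)" by (rule sincos_inj)
  then show "t = s" using assms(1) by simp
qed

definition rfl :: "nat \<Rightarrow> (nat \<Rightarrow> real) \<Rightarrow> nat \<Rightarrow> real" where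
  "rfl k x = (\<lambda>i. if i = k then - x i else x i)"

definition swp :: "nat \<Rightarrow> (nat \<Rightarrow> real) \<Rightarrow> nat \<Rightarrow> real" where
  "swp k x = (\<lambda>i. if i = 0 then x k else if i = k then x 0 else x i)"

lemma cm_rfl: "continuous_map (nsphere n) (nsphere n) (rfl k)"
  unfolding rfl_def by (rule continuous_map_nsphere_reflection)

lemma sum_swp:
  assumes "k \<le> n"
  shows "(\<Sum>i\<le>n. (swp k x i)^2) = (\<Sum>i\<le>n. (x i)^2)"
proof -
  define t where "t = (\<lambda>i::nat. if i = 0 then k else if i = k then 0 else i)"
  have "swp k x = x \<circ> t" by (auto simp: swp_def t_def fun_eq_iff)
  moreover have "bij_betw t {..n} {..n}"
    unfolding bij_betw_def inj_on_def t_def using assms by (auto simp: image_def split: if_splits)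
  ultimately show ?thesis
    using sum.reindex_bij_betw[of t "{..n}" "{..n}" "\<lambda>i. (x i)^2"] by simp
qed

lemma cm_swp:
  assumes "k \<le> n"
  shows "continuous_map (nsphere n) (nsphere n) (swp k)"
proof -
  have cm: "continuous_map (powertop_real UNIV) euclideanreal (\<lambda>x. swp k x j)" for j
    unfolding swp_def by (auto intro: continuous_map_product_projection)
  show ?thesis
    unfolding nsphere continuous_map_in_subtopology
    apply (intro conjI)
     apply (rule continuous_map_from_subtopology)
     apply (simp add: continuous_map_componentwise_UNIV cm)
    using assms sum_swp[OF assms] by (auto simp: swp_def)
qed

lemma swp_swp: "k \<noteq> 0 \<Longrightarrow> swp k (swp k x) = x"
  by (auto simp: swp_def fun_eq_iff)

lemma rfl_conj: "k \<noteq> 0 \<Longrightarrow> rfl k = swp k \<circ> rfl 0 \<circ> swp k"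
  by (auto simp: swp_def rfl_def fun_eq_iff)

lemma deg_rfl:
  assumes "k \<le> n"
  shows "Brouwer_degree2 n (rfl k) = -1"
proof (cases "k = 0")
  case True
  then show ?thesis unfolding rfl_def using Brouwer_degree2_reflection by simp
next
  case False
  have hs: "homeomorphic_map (nsphere n) (nsphere n) (swp k)"
    by (rule homeomorphic_map_involution[OF cm_swp[OF assms]]) (simp add: swp_swp False)
  have d: "\<bar>Brouwer_degree2 n (swp k)\<bar> = 1" by (rule Brouwer_degree2_homeomorphic_map[OF hs])
  have r0: "Brouwer_degree2 n (rfl 0) = -1" unfolding rfl_def using Brouwer_degree2_reflection by simp
  have "Brouwer_degree2 n (rfl k) = Brouwer_degree2 n (swp k \<circ> (rfl 0 \<circ> swp k))"
    using rfl_conj[OF False] by (simp add: o_assoc)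
  also have "\<dots> = Brouwer_degree2 n (swp k) * Brouwer_degree2 n (rfl 0 \<circ> swp k)"
    by (rule Brouwer_degree2_compose[OF continuous_map_compose[OF cm_swp[OF assms] cm_rfl] cm_swp[OF assms]])
  also have "\<dots> = Brouwer_degree2 n (swp k) * (Brouwer_degree2 n (rfl 0) * Brouwer_degree2 n (swp k))"
    by (simp only: Brouwer_degree2_compose[OF cm_swp[OF assms] cm_rfl])
  also have "\<dots> = -1" using d r0 by (auto simp: abs_if split: if_splits)
  finally show ?thesis .
qed

definition hh :: "(nat \<Rightarrow> real) \<Rightarrow> nat \<Rightarrow> real" where
  "hh x = (\<lambda>i. if i = 0 \<or> i = 2 \<or> i = 3 then - x i else x i)"

lemma hh_eq: "hh = rfl 0 \<circ> rfl 2 \<circ> rfl 3"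
  by (auto simp: hh_def rfl_def fun_eq_iff)

lemma hh_orient: "orientation_reversing_S3 hh"
proof -
  have c: "continuous_map S3 S3 hh" unfolding hh_eq
    by (intro continuous_map_compose[where X'=S3] cm_rfl)
  have "homeomorphic_map S3 S3 hh"
    by (rule homeomorphic_map_involution[OF c]) (auto simp: hh_def fun_eq_iff)
  moreover have "Brouwer_degree2 3 hh = -1"
  proof -
    have "Brouwer_degree2 3 hh = Brouwer_degree2 3 (rfl 0) * Brouwer_degree2 3 (rfl 2 \<circ> rfl 3)"
      unfolding hh_eq o_assoc[symmetric] by (rule Brouwer_degree2_compose[OF continuous_map_compose[OF cm_rfl cm_rfl] cm_rfl])
    also have "\<dots> = Brouwer_degree2 3 (rfl 0) * (Brouwer_degree2 3 (rfl 2) * Brouwer_degree2 3 (rfl 3))"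
      by (simp only: Brouwer_degree2_compose[OF cm_rfl cm_rfl])
    also have "\<dots> = -1" by (simp add: deg_rfl)
    finally show ?thesis .
  qed
  ultimately show ?thesis unfolding orientation_reversing_S3_def by simp
qed

lemma hh_G: "hh (G \<phi> \<psi> \<theta>) = G (-\<phi>) \<psi> (\<theta> + pi)"
  by (simp add: hh_def G_def fun_eq_iff)

lemma hh_arc: "hh (arc \<alpha> \<beta> \<theta> \<kappa> t) = arc (-\<alpha>) (-\<beta>) (\<theta> + pi) \<kappa> t"
  unfolding arc_def hh_G by (rule arg_cong2[where f="\<lambda>a b. G a b (\<theta> + pi)"]) (auto simp: algebra_simps)

definition angle_ok :: "real \<Rightarrow> bool" where
  "angle_ok x \<longleftrightarrow> x = 0 \<or> \<bar>x\<bar> = 1/10 \<or> (1 \<le> \<bar>x\<bar> \<and> \<bar>x\<bar> \<le> 3/2) \<or> \<bar>x\<bar> = pi - 1/10"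

lemma angle_ok_bound: "angle_ok x \<Longrightarrow> \<bar>x\<bar> \<le> pi - 1/10"
  unfolding angle_ok_def using pi_gt3 by auto

lemma cos_abs: "cos \<bar>x::real\<bar> = cos x"
  by (cases "x \<ge> 0") auto

lemma cos_tenth_pos: "cos (1/10::real) > 0"
  using cos_small_pos[of "1/10"] by simp

lemma cosA: "\<bar>\<phi>::real\<bar> < 1/10 \<Longrightarrow> cos \<phi> > cos (1/10)"
  using cos_mono_less_eq[of "1/10" "\<bar>\<phi>\<bar>"] pi_gt3 cos_abs[of \<phi>] by auto

lemma cosB: "\<bar>(\<phi>::real) - pi\<bar> < 1/10 \<Longrightarrow> cos \<phi> < - cos (1/10)"
proof -
  assume "\<bar>\<phi> - pi\<bar> < 1/10"
  then have "cos (\<phi> - pi) > cos (1/10)" by (rule cosA)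
  moreover have "cos (\<phi> - pi) = - cos \<phi>" by (simp add: cos_diff)
  ultimately show ?thesis by simp
qed

lemma cosV: "angle_ok x \<Longrightarrow> x \<noteq> 0 \<Longrightarrow> cos x \<le> cos (1/10)"
proof -
  assume a: "angle_ok x" "x \<noteq> 0"
  then have "1/10 \<le> \<bar>x\<bar>" "\<bar>x\<bar> \<le> pi" using pi_gt3 unfolding angle_ok_def by auto
  then have "cos \<bar>x\<bar> \<le> cos (1/10)" using cos_mono_le_eq[of "\<bar>x\<bar>" "1/10"] pi_gt3 by auto
  then show ?thesis by (simp add: cos_abs)
qed

lemma cosV2: "angle_ok x \<Longrightarrow> cos x \<ge> - cos (1/10)"
proof -
  assume a: "angle_ok x"
  then have "\<bar>x\<bar> \<le> pi - 1/10" by (rule angle_ok_bound)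
  then have "cos (pi - 1/10) \<le> cos \<bar>x\<bar>" using cos_mono_le_eq[of "pi - 1/10" "\<bar>x\<bar>"] pi_gt3 by auto
  then show ?thesis by (simp add: cos_abs)
qed

lemma G_cos1: "G \<phi> 0 \<theta> 1 = cos \<phi>"
  by (simp add: G_def)

lemma generic:
  fixes V :: "'v set" and E :: "'v set set" and \<sigma> :: "'v \<Rightarrow> 'v" and a :: "'v \<Rightarrow> real"
  assumes finV: "finite V"
   and E2: "\<forall>e\<in>E. \<exists>u v. e = {u,v} \<and> u \<in> V \<and> v \<in> V \<and> u \<noteq> v"
   and sV: "\<forall>v\<in>V. \<sigma> v \<in> V \<and> \<sigma> (\<sigma> v) = v \<and> a (\<sigma> v) = - a v"
   and inj: "inj_on a V"
   and ok: "\<forall>v\<in>V. angle_ok (a v)"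
   and z: "\<forall>v\<in>V. \<forall>w\<in>V. a v = 0 \<longrightarrow> \<bar>a w\<bar> \<noteq> 1/10"
   and sE: "\<forall>e\<in>E. \<sigma> ` e \<in> E"
   and spec: "\<forall>u\<in>V. {u, \<sigma> u} \<in> E \<longrightarrow> (\<bar>a u\<bar> = 1/10 \<or> \<bar>a u\<bar> = pi - 1/10)"
  shows "achirally_embeddable V E"
proof -
  have finE: "finite E"
  proof (rule finite_subset[of E "Pow V"])
    show "E \<subseteq> Pow V" using E2 by auto
  qed (use finV in auto)
  define N where "N = card E"
  obtain idx where idx: "bij_betw idx E {0..<N}"
    using ex_bij_betw_finite_nat[OF finE] unfolding N_def by auto
  have idxlt: "e \<in> E \<Longrightarrow> idx e < N" for e using idx by (auto simp: bij_betw_def)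
  have idxinj: "e \<in> E \<Longrightarrow> e' \<in> E \<Longrightarrow> idx e = idx e' \<Longrightarrow> e = e'" for e e'
    using idx by (auto simp: bij_betw_def inj_on_def)
  define S where "S e = sum a e" for e
  define th where "th e = (if S e > 0 then pi * idx e / N else pi + pi * idx (\<sigma> ` e) / N)" for e
  define c where "c e = (if S e \<noteq> 0 then arc (Min (a ` e)) (Max (a ` e)) (th e) 1
      else if cos (Max (a ` e)) > 0 then arc (-1/10) (1/10) 0 0 else arc (pi - 1/10) (pi + 1/10) 0 0)" for e
  define pos where "pos v = G (a v) 0 0" for v
  define Z where "Z e \<longleftrightarrow> (\<exists>u\<in>V. e = {u, \<sigma> u} \<and> a u = 1/10)" for e
  define P where "P e \<longleftrightarrow> (\<exists>u\<in>V. e = {u, \<sigma> u} \<and> a u = pi - 1/10)" for e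
  have bnd: "v \<in> V \<Longrightarrow> \<bar>a v\<bar> \<le> pi - 1/10" for v using ok angle_ok_bound by blast
  have pi3: "pi > 3" by (rule pi_gt3)
  have sig: "v \<in> V \<Longrightarrow> \<sigma> v \<in> V" "v \<in> V \<Longrightarrow> \<sigma> (\<sigma> v) = v" "v \<in> V \<Longrightarrow> a (\<sigma> v) = - a v" for v
    using sV by auto
  have cls: "(\<exists>u v. e = {u,v} \<and> u\<in>V \<and> v\<in>V \<and> a u < a v \<and> S e \<noteq> 0 \<and> c e = arc (a u) (a v) (th e) 1 \<and> \<not> Z e \<and> \<not> P e)
     \<or> (Z e \<and> S e = 0 \<and> \<not> P e \<and> c e = arc (-1/10) (1/10) 0 0)
     \<or> (P e \<and> S e = 0 \<and> \<not> Z e \<and> c e = arc (pi - 1/10) (pi + 1/10) 0 0)" if e: "e \<in> E" for e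
  proof -
    obtain u v where uv: "e = {u,v}" "u \<in> V" "v \<in> V" "u \<noteq> v" using E2 e by blast
    have ne: "a u \<noteq> a v" using inj uv by (auto simp: inj_on_def)
    have Se: "S e = a u + a v" using uv by (simp add: S_def)
    show ?thesis
    proof (cases "S e = 0")
      case False
      have nZ: "\<not> Z e" "\<not> P e"
      proof -
        { fix w assume "w \<in> V" "e = {w, \<sigma> w}"
          then have "S e = a w + a (\<sigma> w)"
          proof -
            have "w \<noteq> \<sigma> w" using \<open>e = {w, \<sigma> w}\<close> uv by auto
            then show ?thesis using \<open>e = {w, \<sigma> w}\<close> by (simp add: S_def)
          qed
          then have "S e = 0" using sig \<open>w \<in> V\<close> by simp }
        then show "\<not> Z e" "\<not> P e" using False unfolding Z_def P_def by blast+
      qed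
      have img: "a ` e = {a u, a v}" using uv by simp
      show ?thesis
      proof (cases "a u < a v")
        case True
        then have "Min (a ` e) = a u" "Max (a ` e) = a v" using img by auto
        then have "c e = arc (a u) (a v) (th e) 1" using False by (simp add: c_def)
        then show ?thesis using False nZ uv True by blast
      next
        case F2: False
        then have lt: "a v < a u" using ne by simp
        then have "Min (a ` e) = a v" "Max (a ` e) = a u" using img by auto
        then have "c e = arc (a v) (a u) (th e) 1" using False by (simp add: c_def)
        moreover have "e = {v, u}" using uv by auto
        ultimately show ?thesis using False nZ uv lt by blast
      qed
    next
      case True
      then have "a v = a (\<sigma> u)" using Se sig uv by simp
      then have vs: "v = \<sigma> u" using inj uv sig by (auto simp: inj_on_def)
      then have "\<bar>a u\<bar> = 1/10 \<or> \<bar>a u\<bar> = pi - 1/10" using spec uv e by blast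
      then show ?thesis
      proof
        assume h: "\<bar>a u\<bar> = 1/10"
        have Ze: "Z e"
        proof (cases "a u = 1/10")
          case True then show ?thesis unfolding Z_def using uv vs by blast
        next
          case False
          then have "a (\<sigma> u) = 1/10" using h sig uv by auto
          moreover have "e = {\<sigma> u, \<sigma> (\<sigma> u)}" using uv vs sig by auto
          ultimately show ?thesis unfolding Z_def using sig uv by blast
        qed
        have nP: "\<not> P e"
        proof
          assume "P e"
          then obtain w where w: "w \<in> V" "e = {w, \<sigma> w}" "a w = pi - 1/10" unfolding P_def by blast
          then have "w = u \<or> w = v" using uv by auto
          then show False using h w vs sig uv pi3 by auto
        qed
        have mx: "Max (a ` e) = 1/10"
        proof -
          have "a ` e = {a u, - a u}" using uv vs sig by auto
          then show ?thesis using h by (auto simp: abs_if max_def split: if_splits)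
        qed
        have "c e = arc (-1/10) (1/10) 0 0" unfolding c_def mx using True cos_tenth_pos by simp
        then show ?thesis using True Ze nP by simp
      next
        assume h: "\<bar>a u\<bar> = pi - 1/10"
        have Pe: "P e"
        proof (cases "a u = pi - 1/10")
          case True then show ?thesis unfolding P_def using uv vs by blast
        next
          case False
          then have "a (\<sigma> u) = pi - 1/10" using h sig uv by (auto simp: abs_if split: if_splits)
          moreover have "e = {\<sigma> u, \<sigma> (\<sigma> u)}" using uv vs sig by auto
          ultimately show ?thesis unfolding P_def using sig uv by blast
        qed
        have nZ: "\<not> Z e"
        proof
          assume "Z e"
          then obtain w where w: "w \<in> V" "e = {w, \<sigma> w}" "a w = 1/10" unfolding Z_def by blast
          then have "w = u \<or> w = v" using uv by auto
          then show False using h w vs sig uv pi3 by auto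
        qed
        have mx: "Max (a ` e) = pi - 1/10"
        proof -
          have "a ` e = {a u, - a u}" using uv vs sig by auto
          then show ?thesis using h pi3 by (auto simp: abs_if max_def split: if_splits)
        qed
        have "cos (pi - 1/10) < 0" using cos_tenth_pos by simp
        then have "c e = arc (pi - 1/10) (pi + 1/10) 0 0" unfolding c_def mx using True by simp
        then show ?thesis using True Pe nZ by simp
      qed
    qed
  qed
  have Npos: "e \<in> E \<Longrightarrow> 0 < N" for e using idxlt by fastforce
  have sigE: "e \<in> E \<Longrightarrow> \<sigma> ` e \<in> E" for e using sE by blast
  have sigsig: "e \<in> E \<Longrightarrow> \<sigma> ` (\<sigma> ` e) = e" for e
  proof -
    assume e: "e \<in> E"
    then obtain u v where uv: "e = {u,v}" "u \<in> V" "v \<in> V" using E2 by blast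
    then show ?thesis using sig by auto
  qed
  have Ssig: "S (\<sigma> ` e) = - S e" if e: "e \<in> E" for e
  proof -
    obtain u v where uv: "e = {u,v}" "u \<in> V" "v \<in> V" "u \<noteq> v" using E2 e by blast
    have "\<sigma> u \<noteq> \<sigma> v" using uv sig by metis
    then have "S (\<sigma> ` e) = a (\<sigma> u) + a (\<sigma> v)" using uv by (simp add: S_def)
    also have "\<dots> = - S e" using uv sig by (simp add: S_def)
    finally show ?thesis .
  qed
  have thr: "0 \<le> th e \<and> th e < 2*pi" if e: "e \<in> E" for e
  proof -
    have N: "0 < N" using Npos e .
    have i1: "real (idx e) / N < 1" "real (idx (\<sigma> ` e)) / N < 1"
      using idxlt[OF e] idxlt[OF sigE[OF e]] N by auto
    have "pi * (real (idx e) / N) < pi * 1" "pi * (real (idx (\<sigma> ` e)) / N) < pi * 1"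
      using i1 by (intro mult_strict_left_mono; simp)+
    then show ?thesis unfolding th_def by (auto simp: divide_simps split: if_splits)
  qed
  have thinj: "e = e'" if e: "e \<in> E" "e' \<in> E" "S e \<noteq> 0" "S e' \<noteq> 0" "th e = th e'" for e e'
  proof -
    have N: "0 < N" using Npos e(1) .
    have lt: "pi * (real (idx f) / N) < pi" if "f \<in> E" for f
    proof -
      have "real (idx f) / N < 1" using idxlt[OF that] N by auto
      then have "pi * (real (idx f) / N) < pi * 1" by (intro mult_strict_left_mono) auto
      then show ?thesis by simp
    qed
    have ge: "0 \<le> pi * (real (idx f) / N)" for f by simp
    show ?thesis
    proof (cases "S e > 0"; cases "S e' > 0")
      assume "S e > 0" "S e' > 0"
      then have "real (idx e) = real (idx e')" using e N unfolding th_def by (auto simp: field_simps)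
      then show ?thesis using idxinj e by simp
    next
      assume "S e > 0" "\<not> S e' > 0"
      then have "th e < pi" "th e' \<ge> pi" unfolding th_def using lt[OF e(1)] ge by (auto simp: field_simps)
      then show ?thesis using e by simp
    next
      assume "\<not> S e > 0" "S e' > 0"
      then have "th e' < pi" "th e \<ge> pi" unfolding th_def using lt[OF e(2)] ge by (auto simp: field_simps)
      then show ?thesis using e by simp
    next
      assume "\<not> S e > 0" "\<not> S e' > 0"
      then have "real (idx (\<sigma> ` e)) = real (idx (\<sigma> ` e'))" using e N unfolding th_def by (auto simp: field_simps)
      then have "\<sigma> ` e = \<sigma> ` e'" using idxinj sigE e by simp
      then show ?thesis using sigsig e by metis
    qed
  qed
  have thsig: "cos (th (\<sigma> ` e)) = cos (th e + pi) \<and> sin (th (\<sigma> ` e)) = sin (th e + pi)"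
    if e: "e \<in> E" "S e \<noteq> 0" for e
  proof (cases "S e > 0")
    case True
    then have "th (\<sigma> ` e) = th e + pi" using Ssig[OF e(1)] sigsig[OF e(1)] unfolding th_def by simp
    then show ?thesis by simp
  next
    case False
    then have "S (\<sigma> ` e) > 0" using Ssig[OF e(1)] e(2) by simp
    then have "th (\<sigma> ` e) = th e - pi" using False unfolding th_def by simp
    then show ?thesis by (simp add: cos_diff sin_diff cos_add sin_add)
  qed
  have Zuniq: "e = e'" if "Z e" "Z e'" for e e'
  proof -
    obtain u where u: "u \<in> V" "e = {u, \<sigma> u}" "a u = 1/10" using \<open>Z e\<close> unfolding Z_def by blast
    obtain u' where u': "u' \<in> V" "e' = {u', \<sigma> u'}" "a u' = 1/10" using \<open>Z e'\<close> unfolding Z_def by blast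
    have "u = u'" using inj u u' by (auto simp: inj_on_def)
    then show ?thesis using u u' by simp
  qed
  have Puniq: "e = e'" if "P e" "P e'" for e e'
  proof -
    obtain u where u: "u \<in> V" "e = {u, \<sigma> u}" "a u = pi - 1/10" using \<open>P e\<close> unfolding P_def by blast
    obtain u' where u': "u' \<in> V" "e' = {u', \<sigma> u'}" "a u' = pi - 1/10" using \<open>P e'\<close> unfolding P_def by blast
    have "u = u'" using inj u u' by (auto simp: inj_on_def)
    then show ?thesis using u u' by simp
  qed
  have ish: "(S e \<noteq> 0 \<and> (\<exists>\<phi> \<psi>. c e t = G \<phi> \<psi> (th e) \<and> 0 < \<psi> \<and> \<psi> \<le> 1))
      \<or> (Z e \<and> (\<exists>\<phi>. c e t = G \<phi> 0 0 \<and> \<bar>\<phi>\<bar> < 1/10))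
      \<or> (P e \<and> (\<exists>\<phi>. c e t = G \<phi> 0 0 \<and> \<bar>\<phi> - pi\<bar> < 1/10))"
    if e: "e \<in> E" and t: "0 < t" "t < 1" for e t
  proof -
    have tt: "0 < t * (1 - t)" "t * (1 - t) \<le> 1" using t by (auto intro: mult_le_one)
    from cls[OF e] show ?thesis
    proof (elim disjE conjE exE)
      fix u v assume "S e \<noteq> 0" "c e = arc (a u) (a v) (th e) 1"
      then show ?thesis using tt unfolding arc_def by auto
    next
      assume "Z e" "c e = arc (- 1 / 10) (1 / 10) 0 0"
      moreover have "\<bar>- 1 / 10 + t * (1 / 10 - - 1 / 10)\<bar> < (1/10::real)" using t by (simp add: abs_less_iff field_simps)
      ultimately show ?thesis unfolding arc_def by auto
    next
      assume "P e" "c e = arc (pi - 1 / 10) (pi + 1 / 10) 0 0"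
      moreover have "\<bar>(pi - 1 / 10 + t * (pi + 1 / 10 - (pi - 1 / 10))) - pi\<bar> < (1/10::real)" using t by (simp add: abs_less_iff field_simps)
      ultimately show ?thesis unfolding arc_def by auto
    qed
  qed
  have nz: "a w \<noteq> 0" if "Z e" "w \<in> V" for e w
  proof -
    obtain u where u: "u \<in> V" "a u = 1/10" using \<open>Z e\<close> unfolding Z_def by blast
    then show ?thesis using z \<open>w \<in> V\<close> by force
  qed
  have avoid: "c e t \<noteq> pos w" if e: "e \<in> E" and t: "0 < t" "t < 1" and w: "w \<in> V" for e t w
  proof
    assume eq: "c e t = pos w"
    from ish[OF e t] show False
    proof (elim disjE conjE exE)
      fix \<phi> \<psi> assume "c e t = G \<phi> \<psi> (th e)" "0 < \<psi>" "\<psi> \<le> 1"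
      then show False using G_page_not_C eq unfolding pos_def by metis
    next
      fix \<phi> assume h: "Z e" "c e t = G \<phi> 0 0" "\<bar>\<phi>\<bar> < 1/10"
      then have "cos \<phi> = cos (a w)" using eq G_cos1 unfolding pos_def by metis
      moreover have "cos \<phi> > cos (1/10)" using cosA h by blast
      moreover have "cos (a w) \<le> cos (1/10)" using cosV ok w nz[OF h(1) w] by blast
      ultimately show False by simp
    next
      fix \<phi> assume h: "P e" "c e t = G \<phi> 0 0" "\<bar>\<phi> - pi\<bar> < 1/10"
      then have "cos \<phi> = cos (a w)" using eq G_cos1 unfolding pos_def by metis
      moreover have "cos \<phi> < - cos (1/10)" using cosB h by blast
      moreover have "cos (a w) \<ge> - cos (1/10)" using cosV2 ok w by blast
      ultimately show False by simp
    qed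
  qed
  have disj: "c e t \<noteq> c e' t'" if e: "e \<in> E" "e' \<in> E" "e \<noteq> e'" and t: "0 < t" "t < 1" "0 < t'" "t' < 1"
    for e e' t t'
  proof
    assume eq: "c e t = c e' t'"
    from ish[OF e(1) t(1,2)] ish[OF e(2) t(3,4)] show False
    proof (elim disjE conjE exE)
      fix \<phi> \<psi> \<phi>' \<psi>' assume h: "S e \<noteq> 0" "c e t = G \<phi> \<psi> (th e)" "0 < \<psi>" "\<psi> \<le> 1"
        "S e' \<noteq> 0" "c e' t' = G \<phi>' \<psi>' (th e')" "0 < \<psi>'" "\<psi>' \<le> 1"
      then have "cos (th e) = cos (th e') \<and> sin (th e) = sin (th e')" using G_eq_pages eq by metis
      moreover have "\<bar>th e - th e'\<bar> < 2*pi" using thr[OF e(1)] thr[OF e(2)] by auto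
      ultimately have "th e = th e'" using sincos_inj by metis
      then show False using thinj e h by blast
    next
      fix \<phi> \<psi> \<phi>' assume "c e t = G \<phi> \<psi> (th e)" "0 < \<psi>" "\<psi> \<le> 1" "c e' t' = G \<phi>' 0 0"
      then show False using G_page_not_C eq by metis
    next
      fix \<phi> \<psi> \<phi>' assume "c e t = G \<phi> \<psi> (th e)" "0 < \<psi>" "\<psi> \<le> 1" "c e' t' = G \<phi>' 0 0"
      then show False using G_page_not_C eq by metis
    next
      fix \<phi> \<psi> \<phi>' assume "c e' t' = G \<phi> \<psi> (th e')" "0 < \<psi>" "\<psi> \<le> 1" "c e t = G \<phi>' 0 0"
      then show False using G_page_not_C eq by metis
    next
      fix \<phi> \<phi>' assume "Z e" "Z e'"
      then show False using Zuniq e by blast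
    next
      fix \<phi> \<phi>' assume h: "c e t = G \<phi> 0 0" "\<bar>\<phi>\<bar> < 1/10" "c e' t' = G \<phi>' 0 0" "\<bar>\<phi>' - pi\<bar> < 1/10"
      then have "cos \<phi> = cos \<phi>'" using eq G_cos1 by metis
      moreover have "cos \<phi> > cos (1/10)" using cosA h by blast
      moreover have "cos \<phi>' < - cos (1/10)" using cosB h by blast
      ultimately show False using cos_tenth_pos by simp
    next
      fix \<phi> \<psi> \<phi>' assume "c e' t' = G \<phi> \<psi> (th e')" "0 < \<psi>" "\<psi> \<le> 1" "c e t = G \<phi>' 0 0"
      then show False using G_page_not_C eq by metis
    next
      fix \<phi> \<phi>' assume h: "c e t = G \<phi> 0 0" "\<bar>\<phi> - pi\<bar> < 1/10" "c e' t' = G \<phi>' 0 0" "\<bar>\<phi>'\<bar> < 1/10"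
      then have "cos \<phi> = cos \<phi>'" using eq G_cos1 by metis
      moreover have "cos \<phi>' > cos (1/10)" using cosA h by blast
      moreover have "cos \<phi> < - cos (1/10)" using cosB h by blast
      ultimately show False using cos_tenth_pos by simp
    next
      fix \<phi> \<phi>' assume "P e" "P e'"
      then show False using Puniq e by blast
    qed
  qed
  have arc0: "arc \<alpha> \<beta> \<theta> \<kappa> 0 = G \<alpha> 0 0" "arc \<alpha> \<beta> \<theta> \<kappa> 1 = G \<beta> 0 0" for \<alpha> \<beta> \<theta> \<kappa>
    unfolding arc_def by (simp_all add: G_psi0[of _ \<theta> 0])
  have pieq: "G (pi + 1/10) 0 0 = G (- (pi - 1/10)) 0 0"
    by (rule G_phi) (simp_all add: cos_add sin_add)
  have edge: "continuous_map (top_of_set {0..1}) S3 (c e) \<and> inj_on (c e) {0..1} \<and> c e ` {0,1} = pos ` e"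
    if e: "e \<in> E" for e
    using cls[OF e]
  proof (elim disjE conjE exE)
    fix u v assume h: "e = {u, v}" "u \<in> V" "v \<in> V" "a u < a v" "c e = arc (a u) (a v) (th e) 1"
    have "\<bar>a v - a u\<bar> < 2 * pi" using bnd[OF h(2)] bnd[OF h(3)] by auto
    then show ?thesis using h cont_arc arc_inj[of "a u" "a v" 1 "th e"]
      by (auto simp: arc0 pos_def)
  next
    assume h: "Z e" "c e = arc (- 1 / 10) (1 / 10) 0 0"
    then obtain u where u: "u \<in> V" "e = {u, \<sigma> u}" "a u = 1/10" unfolding Z_def by blast
    have "\<bar>1/10 - - 1/10\<bar> < 2 * (pi::real)" using pi3 by simp
    moreover have "pos u = G (1/10) 0 0" "pos (\<sigma> u) = G (-(1/10)) 0 0"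
      unfolding pos_def sig(3)[OF u(1)] u(3) by simp_all
    moreover have "c e ` {0,1} = {G (- 1 / 10) 0 0, G (1/10) 0 0}" unfolding h(2) by (simp add: arc0)
    ultimately show ?thesis using h u cont_arc arc_inj[of "- 1/10" "1/10" 0 0]
      by auto
  next
    assume h: "P e" "c e = arc (pi - 1 / 10) (pi + 1 / 10) 0 0"
    then obtain u where u: "u \<in> V" "e = {u, \<sigma> u}" "a u = pi - 1/10" unfolding P_def by blast
    have "\<bar>(pi + 1/10) - (pi - 1/10)\<bar> < 2 * (pi::real)" using pi3 by simp
    moreover have "pos u = G (pi - 1/10) 0 0" "pos (\<sigma> u) = G (-(pi - 1/10)) 0 0"
      unfolding pos_def sig(3)[OF u(1)] u(3) by simp_all
    moreover have "c e ` {0,1} = {G (pi - 1 / 10) 0 0, G (-(pi - 1/10)) 0 0}" unfolding h(2) by (simp add: arc0 pieq)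
    ultimately show ?thesis using h u cont_arc arc_inj[of "pi - 1/10" "pi + 1/10" 0 0]
      by auto
  qed
  have posinj: "inj_on pos V"
  proof
    fix u v assume uv: "u \<in> V" "v \<in> V" "pos u = pos v"
    then have "sin (a u) = sin (a v) \<and> cos (a u) = cos (a v)"
      using G_eq_same_page[of "a u" 0 0 "a v" 0] unfolding pos_def by auto
    moreover have "\<bar>a u - a v\<bar> < 2*pi" using bnd[OF uv(1)] bnd[OF uv(2)] by linarith
    ultimately have "a u = a v" using sincos_inj by blast
    then show "u = v" using inj uv by (auto simp: inj_on_def)
  qed
  have emb: "graph_embedding_S3 V E pos c"
    unfolding graph_embedding_S3_def
  proof (intro conjI ballI impI)
    show "inj_on pos V" by (rule posinj)
    show "pos ` V \<subseteq> topspace S3" using G_top unfolding pos_def by blast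
  next
    fix e assume e: "e \<in> E"
    show "continuous_map (top_of_set {0..1}) S3 (c e)" "inj_on (c e) {0..1}" "c e ` {0, 1} = pos ` e"
      using edge[OF e] by auto
    show "c e ` {0<..<1} \<inter> pos ` V = {}" using avoid[OF e] by fastforce
  next
    fix e e' assume "e \<in> E" "e' \<in> E" "e \<noteq> e'"
    then show "c e ` {0<..<1} \<inter> c e' ` {0<..<1} = {}" using disj by fastforce
  qed
  have hhpos: "hh (pos v) = pos (\<sigma> v)" if "v \<in> V" for v
    using that sig(3) by (simp add: pos_def hh_G G_psi0[of _ pi 0])
  have hharc: "hh (c e t) \<in> c (\<sigma> ` e) ` {0..1}" if e: "e \<in> E" and t: "t \<in> {0..1}" for e t
  proof -
    have t1: "1 - t \<in> {0..1}" using t by auto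
    from cls[OF e] show ?thesis
    proof (elim disjE conjE exE)
      fix u v assume h: "e = {u, v}" "u \<in> V" "v \<in> V" "a u < a v" "S e \<noteq> 0" "c e = arc (a u) (a v) (th e) 1"
      have img: "a ` (\<sigma> ` e) = {- a v, - a u}" using h sig by auto
      have mm: "Min (a ` (\<sigma> ` e)) = - a v" "Max (a ` (\<sigma> ` e)) = - a u" unfolding img using h by auto
      have S2: "S (\<sigma> ` e) \<noteq> 0" using Ssig[OF e] h by simp
      have ce2: "c (\<sigma> ` e) = arc (- a v) (- a u) (th (\<sigma> ` e)) 1" unfolding c_def mm using S2 by simp
      have "hh (c e t) = arc (- a u) (- a v) (th e + pi) 1 t" using h by (simp add: hh_arc)
      also have "\<dots> = arc (- a v) (- a u) (th e + pi) 1 (1 - t)" by (simp add: arc_rev)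
      also have "\<dots> = arc (- a v) (- a u) (th (\<sigma> ` e)) 1 (1 - t)"
        unfolding arc_def using thsig[OF e h(5)] by (metis G_eqI)
      finally show ?thesis using ce2 t1 by auto
    next
      assume h: "Z e" "c e = arc (- 1 / 10) (1 / 10) 0 0"
      then obtain u where u: "u \<in> V" "e = {u, \<sigma> u}" "a u = 1/10" unfolding Z_def by blast
      have se: "\<sigma> ` e = e" using u sig by auto
      have "hh (c e t) = arc (1/10) (- 1/10) pi 0 t" using h by (simp add: hh_arc)
      also have "\<dots> = arc (- 1/10) (1/10) pi 0 (1 - t)" by (simp add: arc_rev)
      also have "\<dots> = arc (- 1/10) (1/10) 0 0 (1 - t)" unfolding arc_def by (simp add: G_psi0[of _ pi 0])
      finally show ?thesis using h t1 se by auto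
    next
      assume h: "P e" "c e = arc (pi - 1 / 10) (pi + 1 / 10) 0 0"
      then obtain u where u: "u \<in> V" "e = {u, \<sigma> u}" "a u = pi - 1/10" unfolding P_def by blast
      have se: "\<sigma> ` e = e" using u sig by auto
      have "hh (c e t) = arc (- (pi - 1/10)) (- (pi + 1/10)) (0 + pi) 0 t" using h by (simp only: hh_arc)
      also have "\<dots> = arc (- (pi + 1/10)) (- (pi - 1/10)) (0 + pi) 0 (1 - t)" by (simp only: arc_rev)
      also have "\<dots> = arc (pi - 1/10) (pi + 1/10) 0 0 (1 - t)"
      proof -
        have "G (- (pi + 1/10) + (1 - t) * (- (pi - 1/10) - - (pi + 1/10))) 0 (0 + pi)
            = G (- (pi + 1/10) + (1 - t) * (- (pi - 1/10) - - (pi + 1/10))) 0 0" by (rule G_psi0)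
        also have "\<dots> = G ((pi - 1/10) + (1 - t) * ((pi + 1/10) - (pi - 1/10))) 0 0"
        proof (rule G_phi)
          let ?x = "- (pi + 1/10) + (1 - t) * (- (pi - 1/10) - - (pi + 1/10))"
          have "(pi - 1/10) + (1 - t) * ((pi + 1/10) - (pi - 1/10)) = ?x + 2 * pi" by (simp add: algebra_simps)
          then show "cos ?x = cos ((pi - 1/10) + (1 - t) * ((pi + 1/10) - (pi - 1/10)))"
                    "sin ?x = sin ((pi - 1/10) + (1 - t) * ((pi + 1/10) - (pi - 1/10)))"
            by (simp_all only: cos_periodic sin_periodic)
        qed
        finally show ?thesis unfolding arc_def by simp
      qed
      finally show ?thesis using h t1 se by auto
    qed
  qed
  define img where "img = graph_image_S3 V E pos c"
  have sub: "hh ` img \<subseteq> img"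
  proof
    fix y assume "y \<in> hh ` img"
    then obtain x where x: "x \<in> img" "y = hh x" by blast
    show "y \<in> img"
    proof (cases "x \<in> pos ` V")
      case True
      then obtain v where "v \<in> V" "x = pos v" by blast
      then show ?thesis using x hhpos sig unfolding img_def graph_image_S3_def by auto
    next
      case False
      then obtain e t where et: "e \<in> E" "t \<in> {0..1}" "x = c e t" using x unfolding img_def graph_image_S3_def by blast
      then have "y \<in> c (\<sigma> ` e) ` {0..1}" using x hharc by simp
      then have "y \<in> (\<Union>e\<in>E. c e ` {0..1})" using sigE[OF et(1)] by (rule UN_I[rotated])
      then show ?thesis unfolding img_def graph_image_S3_def by (rule UnI2)
    qed
  qed
  have hhhh: "hh (hh x) = x" for x by (simp add: hh_def fun_eq_iff)
  have "img \<subseteq> hh ` img"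
  proof
    fix x assume "x \<in> img"
    then have "hh x \<in> img" using sub by blast
    then show "x \<in> hh ` img" using hhhh by (metis image_eqI)
  qed
  then have "hh ` img = img" using sub by blast
  then show ?thesis unfolding achirally_embeddable_def img_def using emb hh_orient by blast
qed

definition mag :: "nat \<Rightarrow> nat \<Rightarrow> real" where
  "mag i k = 1 + 1 / (2 + real (prod_encode (i, k)))"

lemma mag_bounds: "1 < mag i k" "mag i k \<le> 3/2"
  unfolding mag_def by (auto simp: field_simps)

lemma mag_inj: "mag i k = mag i' k' \<Longrightarrow> i = i' \<and> k = k'"
  unfolding mag_def using prod_encode_eq by (auto simp: field_simps)

fun av :: "nat list \<Rightarrow> nat \<Rightarrow> nat \<Rightarrow> nat \<Rightarrow> nat \<Rightarrow> nat \<times> nat \<Rightarrow> real" where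
  "av L pa pb za zb (i, j) = (if i = pa then pi - 1/10 else if i = pb then - (pi - 1/10)
     else if i = za then 1/10 else if i = zb then - (1/10)
     else if odd j then - mag i (j div 2) else if j + 1 < L ! i then mag i (j div 2) else 0)"

fun sg :: "nat list \<Rightarrow> nat \<Rightarrow> nat \<Rightarrow> nat \<Rightarrow> nat \<Rightarrow> nat \<times> nat \<Rightarrow> nat \<times> nat" where
  "sg L pa pb za zb (i, j) = (if i = pa then (pb, j) else if i = pb then (pa, j)
     else if i = za then (zb, j) else if i = zb then (za, j)
     else if odd j then (i, j - 1) else if j + 1 < L ! i then (i, j + 1) else (i, j))"

definition pm :: "nat \<Rightarrow> nat \<Rightarrow> nat \<Rightarrow> nat \<Rightarrow> nat \<Rightarrow> nat" where
  "pm pa pb za zb x = (if x = pa then pb else if x = pb then pa else if x = za then zb else if x = zb then za else x)"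

lemma fst_sg: "fst (sg L pa pb za zb v) = pm pa pb za zb (fst v)"
  by (cases v) (simp add: pm_def)

lemma pm_inj: "distinct [pa,pb,za,zb] \<Longrightarrow> pm pa pb za zb x = pm pa pb za zb y \<Longrightarrow> x = y"
  unfolding pm_def by (auto split: if_splits)

lemma cm_V: "(v \<in> cm_vertices L) \<longleftrightarrow> fst v < length L \<and> snd v < L ! fst v"
  by (cases v) (simp add: cm_vertices_def)

lemma inst:
  fixes L :: "nat list" and pa pb za zb :: nat
  assumes dist: "distinct [pa,pb,za,zb]"
    and Pp1: "pa < length L \<longleftrightarrow> pb < length L" and Pp2: "pa < length L \<Longrightarrow> L!pa = 1 \<and> L!pb = 1"
    and Pz1: "za < length L \<longleftrightarrow> zb < length L" and Pz2: "za < length L \<Longrightarrow> L!za = 1 \<and> L!zb = 1"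
    and odd1: "\<forall>x<length L. \<forall>y<length L. x \<notin> {pa,pb,za,zb} \<longrightarrow> y \<notin> {pa,pb,za,zb} \<longrightarrow> odd (L!x) \<longrightarrow> odd (L!y) \<longrightarrow> x = y"
    and oddz: "za < length L \<Longrightarrow> \<forall>x<length L. x \<notin> {pa,pb,za,zb} \<longrightarrow> even (L!x)"
  shows "achirally_embeddable (cm_vertices L) (cm_edges L)"
proof -
  define V where "V = cm_vertices L"
  define A where "A = av L pa pb za zb"
  define Sg where "Sg = sg L pa pb za zb"
  have pi3: "pi > 3" by (rule pi_gt3)
  have Vi: "(i, j) \<in> V \<longleftrightarrow> i < length L \<and> j < L ! i" for i j by (simp add: V_def cm_vertices_def)
  have finV: "finite V"
  proof (rule finite_subset)
    show "V \<subseteq> {..<length L} \<times> {..<Max (set L)}"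
      using Vi by (auto simp: V_def cm_V) (meson Max_ge finite_set le_trans less_le_not_le nth_mem order.strict_trans2)
  qed simp
  have Aval: "A (i,j) = (if i = pa then pi - 1/10 else if i = pb then - (pi - 1/10)
     else if i = za then 1/10 else if i = zb then - (1/10)
     else if odd j then - mag i (j div 2) else if j + 1 < L ! i then mag i (j div 2) else 0)" for i j
    by (simp add: A_def)
  have Sgval: "Sg (i,j) = (if i = pa then (pb, j) else if i = pb then (pa, j)
     else if i = za then (zb, j) else if i = zb then (za, j)
     else if odd j then (i, j - 1) else if j + 1 < L ! i then (i, j + 1) else (i, j))" for i j
    by (simp add: Sg_def)
  have spj: "j = 0" if "(i,j) \<in> V" "i \<in> {pa,pb,za,zb}" for i j
    using that Pp1 Pp2 Pz1 Pz2 Vi by auto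
  have sV: "\<forall>v\<in>V. Sg v \<in> V \<and> Sg (Sg v) = v \<and> A (Sg v) = - A v"
  proof
    fix v assume v: "v \<in> V"
    obtain i j where ij: "v = (i,j)" by (cases v)
    have iv: "i < length L" "j < L ! i" using v ij Vi by auto
    show "Sg v \<in> V \<and> Sg (Sg v) = v \<and> A (Sg v) = - A v"
    proof (cases "i \<in> {pa,pb,za,zb}")
      case True
      then have "j = 0" using spj v ij by blast
      then show ?thesis using True dist iv ij Pp1 Pp2 Pz1 Pz2 by (auto simp: Sgval Aval Vi)
    next
      case False
      then have ns: "i \<noteq> pa" "i \<noteq> pb" "i \<noteq> za" "i \<noteq> zb" by auto
      consider (o) "odd j" | (e) "even j" "j + 1 < L ! i" | (f) "even j" "\<not> j + 1 < L ! i" by blast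
      then show ?thesis
      proof cases
        case o
        then have "j - 1 + 1 = j" "even (j - 1)" "(j - 1) div 2 = j div 2" by presburger+
        then show ?thesis using o ns iv ij by (auto simp: Sgval Aval Vi)
      next
        case e
        then have "odd (j + 1)" "(j + 1) div 2 = j div 2" by presburger+
        then show ?thesis using e ns iv ij by (auto simp: Sgval Aval Vi)
      qed (use ns iv ij in \<open>auto simp: Sgval Aval Vi\<close>)
    qed
  qed
  have desc: "(odd j \<and> A (i,j) = - mag i (j div 2)) \<or> (even j \<and> j + 1 < L!i \<and> A (i,j) = mag i (j div 2))
      \<or> (even j \<and> j + 1 = L!i \<and> A (i,j) = 0)"
    if "(i,j) \<in> V" "i \<notin> {pa,pb,za,zb}" for i j
    using that by (auto simp: Aval Vi)
  have spv: "A (i,j) = (if i = pa then pi - 1/10 else if i = pb then - (pi - 1/10)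
     else if i = za then 1/10 else - (1/10))" if "i \<in> {pa,pb,za,zb}" for i j
    using that dist by (auto simp: Aval)
  have nsb: "A (i,j) = 0 \<or> (1 < \<bar>A (i,j)\<bar> \<and> \<bar>A (i,j)\<bar> \<le> 3/2)"
    if "(i,j) \<in> V" "i \<notin> {pa,pb,za,zb}" for i j
    using desc[OF that] mag_bounds[of i "j div 2"] by auto
  have ok: "\<forall>v\<in>V. angle_ok (A v)"
  proof
    fix v assume v: "v \<in> V"
    obtain i j where ij: "v = (i,j)" by (cases v)
    show "angle_ok (A v)"
    proof (cases "i \<in> {pa,pb,za,zb}")
      case True then show ?thesis unfolding ij spv[OF True] angle_ok_def using pi3 by auto
    next
      case False then show ?thesis using nsb[of i j] v ij unfolding angle_ok_def by auto
    qed
  qed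
  have inj: "inj_on A V"
  proof
    fix v w assume v: "v \<in> V" and w: "w \<in> V" and eq: "A v = A w"
    obtain i j where ij: "v = (i,j)" by (cases v)
    obtain i' j' where ij': "w = (i',j')" by (cases w)
    have vv: "(i,j) \<in> V" and ww: "(i',j') \<in> V" using v w ij ij' by auto
    show "v = w"
    proof (cases "i \<in> {pa,pb,za,zb}")
      case True
      have j0: "j = 0" using spj vv True by blast
      show ?thesis
      proof (cases "i' \<in> {pa,pb,za,zb}")
        case True2: True
        have j0': "j' = 0" using spj ww True2 by blast
        have "i = i'" using eq True True2 dist pi3 unfolding ij ij' spv[OF True] spv[OF True2]
          by (auto split: if_splits)
        then show ?thesis using ij ij' j0 j0' by simp
      next
        case False
        have "A (i,j) \<in> {pi - 1/10, - (pi - 1/10), 1/10, - (1/10)}" using spv[OF True] by auto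
        then show ?thesis using nsb[OF ww False] eq ij ij' pi3 by auto
      qed
    next
      case False
      show ?thesis
      proof (cases "i' \<in> {pa,pb,za,zb}")
        case True2: True
        have "A (i',j') \<in> {pi - 1/10, - (pi - 1/10), 1/10, - (1/10)}" using spv[OF True2] by auto
        then show ?thesis using nsb[OF vv False] eq ij ij' pi3 by auto
      next
        case False2: False
        have i: "i < length L" "i' < length L" using vv ww Vi by auto
        from desc[OF vv False] desc[OF ww False2] show ?thesis
        proof (elim disjE conjE)
          assume "odd j" "A (i, j) = - mag i (j div 2)" "odd j'" "A (i', j') = - mag i' (j' div 2)"
          then have "i = i' \<and> j div 2 = j' div 2" using mag_inj eq ij ij' by auto
          then show ?thesis using \<open>odd j\<close> \<open>odd j'\<close> ij ij' by (metis odd_two_times_div_two_succ)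
        next
          assume "even j" "j + 1 < L!i" "A (i, j) = mag i (j div 2)" "even j'" "j' + 1 < L!i'" "A (i', j') = mag i' (j' div 2)"
          then have "i = i' \<and> j div 2 = j' div 2" using mag_inj eq ij ij' by auto
          then show ?thesis using \<open>even j\<close> \<open>even j'\<close> ij ij' by (metis even_two_times_div_two)
        next
          assume "even j" "j + 1 = L!i" "even j'" "j' + 1 = L!i'"
          then have "odd (L!i)" "odd (L!i')" by presburger+
          then have "i = i'" using odd1 i False False2 by blast
          then show ?thesis using \<open>j + 1 = L!i\<close> \<open>j' + 1 = L!i'\<close> ij ij' by simp
        qed (use mag_bounds[of i "j div 2"] mag_bounds[of i' "j' div 2"] eq ij ij' in auto)
      qed
    qed
  qed
  define Ed where "Ed = cm_edges L"
  have Ed: "e \<in> Ed \<longleftrightarrow> (\<exists>x y. e = {x,y} \<and> x \<in> V \<and> y \<in> V \<and> fst x \<noteq> fst y)" for e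
    by (simp add: Ed_def cm_edges_def V_def)
  have E2: "\<forall>e\<in>Ed. \<exists>u v. e = {u,v} \<and> u \<in> V \<and> v \<in> V \<and> u \<noteq> v"
    using Ed by blast
  have fsg: "fst (Sg v) = pm pa pb za zb (fst v)" for v unfolding Sg_def by (rule fst_sg)
  have sE: "\<forall>e\<in>Ed. Sg ` e \<in> Ed"
  proof
    fix e assume "e \<in> Ed"
    then obtain x y where xy: "e = {x,y}" "x \<in> V" "y \<in> V" "fst x \<noteq> fst y" using Ed by blast
    have "fst (Sg x) \<noteq> fst (Sg y)" using xy(4) pm_inj[OF dist] fsg by metis
    moreover have "Sg x \<in> V" "Sg y \<in> V" using sV xy by auto
    ultimately have "\<exists>x' y'. Sg ` e = {x',y'} \<and> x' \<in> V \<and> y' \<in> V \<and> fst x' \<noteq> fst y'"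
      using xy by (intro exI[of _ "Sg x"] exI[of _ "Sg y"]) auto
    then show "Sg ` e \<in> Ed" unfolding Ed by blast
  qed
  have pmid: "pm pa pb za zb i = i" if "i \<notin> {pa,pb,za,zb}" for i using that by (simp add: pm_def)
  have spec: "\<forall>u\<in>V. {u, Sg u} \<in> Ed \<longrightarrow> (\<bar>A u\<bar> = 1/10 \<or> \<bar>A u\<bar> = pi - 1/10)"
  proof (intro ballI impI)
    fix u assume u: "u \<in> V" and e: "{u, Sg u} \<in> Ed"
    obtain i j where ij: "u = (i,j)" by (cases u)
    from e obtain x y where xy: "{u, Sg u} = {x,y}" "fst x \<noteq> fst y" using Ed by blast
    have "fst u \<noteq> fst (Sg u)" using xy by (auto simp: doubleton_eq_iff)
    then have "i \<in> {pa,pb,za,zb}" using fsg pmid ij by fastforce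
    then show "\<bar>A u\<bar> = 1/10 \<or> \<bar>A u\<bar> = pi - 1/10" unfolding ij spv[OF \<open>i \<in> _\<close>] using pi3 by auto
  qed
  have zz: "\<forall>v\<in>V. \<forall>w\<in>V. A v = 0 \<longrightarrow> \<bar>A w\<bar> \<noteq> 1/10"
  proof (intro ballI impI)
    fix v w assume v: "v \<in> V" and w: "w \<in> V" and a0: "A v = 0"
    obtain i j where ij: "v = (i,j)" by (cases v)
    obtain i' j' where ij': "w = (i',j')" by (cases w)
    have ns: "i \<notin> {pa,pb,za,zb}"
    proof
      assume "i \<in> {pa,pb,za,zb}" then show False using a0 ij pi3 spv by (auto split: if_splits)
    qed
    have "(i,j) \<in> V" using v ij by simp
    from desc[OF this ns] have "even j" "j + 1 = L!i"
      using a0 ij mag_bounds[of i "j div 2"] by auto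
    then have "odd (L!i)" by presburger
    moreover have "i < length L" using v ij Vi by auto
    ultimately have nza: "\<not> za < length L" using oddz ns by blast
    then have nzb: "\<not> zb < length L" using Pz1 by simp
    have "i' < length L" using w ij' Vi by auto
    then have "i' \<noteq> za" "i' \<noteq> zb" using nza nzb by auto
    show "\<bar>A w\<bar> \<noteq> 1/10"
    proof (cases "i' \<in> {pa,pb,za,zb}")
      case True
      then show ?thesis using \<open>i' \<noteq> za\<close> \<open>i' \<noteq> zb\<close> pi3 unfolding ij' spv[OF True] by auto
    next
      case False
      then show ?thesis using nsb[of i' j'] w ij' by auto
    qed
  qed
  have "achirally_embeddable V Ed"
    by (rule generic[OF finV E2 sV inj ok zz sE spec])
  then show ?thesis by (simp add: V_def Ed_def)
qed

lemma perm4_distinct: "{i,j,k,l} = {0,1,2,3::nat} \<Longrightarrow> distinct [i,j,k,l]"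
  by (rule card_distinct) (simp add: insert_commute)

theorem theorem2:
  fixes ps :: "nat list" and q1 q2 q3 q4 :: nat
  assumes "\<forall>p \<in> set ps. even p"
    and "q_condition q1 q2 q3 q4"
  shows "achirally_embeddable (cm_vertices (ps @ [q1, q2, q3, q4]))
                              (cm_edges (ps @ [q1, q2, q3, q4]))"
proof -
  define q where "q = [q1,q2,q3,q4]"
  define L where "L = ps @ q"
  define n where "n = length ps"
  have len: "length L = n + 4" by (simp add: L_def n_def q_def)
  have Llow: "x < n \<Longrightarrow> even (L!x)" for x
    using assms(1) by (auto simp: L_def n_def nth_append)
  have Lhigh: "m < 4 \<Longrightarrow> L!(n+m) = q!m" for m by (simp add: L_def n_def nth_append)
  have split: "x < n + 4 \<Longrightarrow> x < n \<or> (\<exists>m<4. x = n + m)" for x by presburger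
  have oddx: "odd (L!x) \<Longrightarrow> x < n + 4 \<Longrightarrow> \<exists>m<4. x = n + m \<and> odd (q!m)" for x
    using split Llow Lhigh by metis
  have qc: "(\<forall>i<4. q ! i = 0)
     \<or> (\<exists>i<4. odd (q ! i) \<and> (\<forall>j<4. j \<noteq> i \<longrightarrow> q ! j = 0))
     \<or> (\<exists>i j k l. {i, j, k, l} = {0, 1, 2, 3} \<and>
           q ! i = 1 \<and> q ! j = 1 \<and> q ! k = 0 \<and> (odd (q ! l) \<or> q ! l = 0))
     \<or> (\<forall>i<4. q ! i = 1)" using assms(2) unfolding q_condition_def q_def Let_def by simp
  have "achirally_embeddable (cm_vertices L) (cm_edges L)"
    using qc
  proof (elim disjE)
    assume h: "\<forall>i<4. q ! i = 0"
    show ?thesis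
    proof (rule inst[of "n+4" "n+5" "n+6" "n+7"])
      show "\<forall>x<length L. \<forall>y<length L. x \<notin> {n+4, n+5, n+6, n+7} \<longrightarrow> y \<notin> {n+4, n+5, n+6, n+7} \<longrightarrow>
          odd (L ! x) \<longrightarrow> odd (L ! y) \<longrightarrow> x = y"
        using oddx h len by fastforce
    qed (use len in auto)
  next
    assume "\<exists>i<4. odd (q ! i) \<and> (\<forall>j<4. j \<noteq> i \<longrightarrow> q ! j = 0)"
    then obtain i where h: "i < 4" "odd (q ! i)" "\<forall>j<4. j \<noteq> i \<longrightarrow> q ! j = 0" by blast
    show ?thesis
    proof (rule inst[of "n+4" "n+5" "n+6" "n+7"])
      show "\<forall>x<length L. \<forall>y<length L. x \<notin> {n+4, n+5, n+6, n+7} \<longrightarrow> y \<notin> {n+4, n+5, n+6, n+7} \<longrightarrow>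
          odd (L ! x) \<longrightarrow> odd (L ! y) \<longrightarrow> x = y"
      proof (intro allI impI)
        fix x y assume "x < length L" "y < length L" "odd (L!x)" "odd (L!y)"
        then obtain m m' where "m < 4" "x = n + m" "odd (q!m)" "m' < 4" "y = n + m'" "odd (q!m')"
          using oddx len by metis
        then show "x = y" using h by (metis even_zero)
      qed
    qed (use len in auto)
  next
    assume "\<exists>i j k l. {i, j, k, l} = {0, 1, 2, 3} \<and>
           q ! i = 1 \<and> q ! j = 1 \<and> q ! k = 0 \<and> (odd (q ! l) \<or> q ! l = 0)"
    then obtain i j k l where h: "{i, j, k, l} = {0, 1, 2, 3::nat}" "q ! i = 1" "q ! j = 1" "q ! k = 0" "odd (q ! l) \<or> q ! l = 0"
      by blast
    have d: "distinct [i,j,k,l]" using perm4_distinct[OF h(1)] .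
    have "i \<in> {0,1,2,3::nat}" "j \<in> {0,1,2,3::nat}" "k \<in> {0,1,2,3::nat}" "l \<in> {0,1,2,3::nat}"
      unfolding h(1)[symmetric] by blast+
    then have lt: "i < 4" "j < 4" "k < 4" "l < 4" by auto
    have mem: "m < 4 \<Longrightarrow> m = i \<or> m = j \<or> m = k \<or> m = l" for m
    proof -
      assume "m < 4"
      then have "m \<in> {0,1,2,3::nat}" by auto
      then show ?thesis using h(1) by blast
    qed
    show ?thesis
    proof (rule inst[of "n+i" "n+j" "n+4" "n+5"])
      show "distinct [n+i, n+j, n+4, n+5]" using d lt by auto
      show "L ! (n + i) = 1 \<and> L ! (n + j) = 1" using Lhigh lt h by simp
      show "\<forall>x<length L. \<forall>y<length L. x \<notin> {n+i, n+j, n+4, n+5} \<longrightarrow> y \<notin> {n+i, n+j, n+4, n+5} \<longrightarrow>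
          odd (L ! x) \<longrightarrow> odd (L ! y) \<longrightarrow> x = y"
      proof (intro allI impI)
        fix x y assume a: "x < length L" "y < length L" "odd (L!x)" "odd (L!y)"
          "x \<notin> {n+i, n+j, n+4, n+5}" "y \<notin> {n+i, n+j, n+4, n+5}"
        obtain m where m: "m < 4" "x = n + m" "odd (q!m)" using oddx[of x] a(1,3) len by auto
        obtain m' where m': "m' < 4" "y = n + m'" "odd (q!m')" using oddx[of y] a(2,4) len by auto
        note mm = m m'
        have "m \<noteq> i" "m \<noteq> j" using a(5) m(2) by auto
        moreover have "m \<noteq> k" using m(3) h(4) by auto
        ultimately have "m = l" using mem[OF m(1)] by blast
        have "m' \<noteq> i" "m' \<noteq> j" using a(6) m'(2) by auto
        moreover have "m' \<noteq> k" using m'(3) h(4) by auto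
        ultimately have "m' = l" using mem[OF m'(1)] by blast
        show "x = y" using mm \<open>m = l\<close> \<open>m' = l\<close> by simp
      qed
      show "n + i < length L \<longleftrightarrow> n + j < length L" using len lt by simp
      show "n + 4 < length L \<longleftrightarrow> n + 5 < length L" using len by simp
      show "n + 4 < length L \<Longrightarrow> L ! (n + 4) = 1 \<and> L ! (n + 5) = 1" using len by simp
      show "n + 4 < length L \<Longrightarrow> \<forall>x<length L. x \<notin> {n+i, n+j, n+4, n+5} \<longrightarrow> even (L!x)" using len by simp
    qed
  next
    assume h: "\<forall>i<4. q ! i = 1"
    show ?thesis
    proof (rule inst[of "n" "n+1" "n+2" "n+3"])
      show "\<forall>x<length L. \<forall>y<length L. x \<notin> {n, n+1, n+2, n+3} \<longrightarrow> y \<notin> {n, n+1, n+2, n+3} \<longrightarrow>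
          odd (L ! x) \<longrightarrow> odd (L ! y) \<longrightarrow> x = y"
      proof (intro allI impI)
        fix x y assume a: "x < length L" "y < length L" "odd (L!x)" "x \<notin> {n, n+1, n+2, n+3}"
        then obtain m where "m < 4" "x = n + m" using oddx len by metis
        then have False using a by (auto simp: less_Suc_eq numeral_eq_Suc)
        then show "x = y" ..
      qed
      show "n + 2 < length L \<Longrightarrow> \<forall>x<length L. x \<notin> {n, n+1, n+2, n+3} \<longrightarrow> even (L!x)"
      proof (intro allI impI)
        fix x assume a: "x < length L" "x \<notin> {n, n+1, n+2, n+3}"
        then have "x < n" using len by auto
        then show "even (L!x)" by (rule Llow)
      qed
    qed (use len h Lhigh[of 0] Lhigh[of 1] Lhigh[of 2] Lhigh[of 3] in auto)
  qed
  then show ?thesis by (simp add: L_def q_def)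
qed

end
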